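(* For every $N\ge 1$, the $(N-1)$-star graph (one central node adjacent to each of the other $N-1$ nodes, no other edges) has complex sign rank $1$; that is, there exists $\mathbf{z}\in\mathbb{C}^N$ such that $\operatorname{sign}(A_{ij})=\operatorname{sign}(\mathfrak{Re}(z_iz_j))$ for all $i\neq j$, where $\mathbf{A}$ is its adjacency matrix.
   Context: $\operatorname{sign}:\mathbb{R}\to\{+,-\}$ takes the value $-$ on $(-\infty,0]$ and $+$ on $(0,\infty)$. Diagonal entries of adjacency matrices are ignored. The complex sign rank of $\mathbf{A}\in\mathbb{R}^{N\times N}$ is the minimal $f$ such that there exists $\mathbf{Z}\in\mathbb{C}^{N\times f}$ with $\operatorname{sign}(A_{ij})=\operatorname{sign}(\mathfrak{Re}((\mathbf{Z}\mathbf{Z}^\top)_{ij}))$ for all $i\neq j$, where $\mathbf{Z}^\top$ is the (non-conjugated) transpose. *)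

theory Defs
  imports "HOL-Analysis.Analysis"
begin

text \<open>sign: False (i.e. "-") on (-inf,0], True (i.e. "+") on (0,inf).\<close>
definition sgnpm :: "real \<Rightarrow> bool" where
  "sgnpm x \<longleftrightarrow> x > 0"

text \<open>Adjacency matrix of the (N-1)-star on nodes 0..N-1 with centre 0
  (entries outside 0..N-1 are irrelevant).\<close>
definition star_adj :: "nat \<Rightarrow> nat \<Rightarrow> real" where
  "star_adj i j = (if i \<noteq> j \<and> (i = 0 \<or> j = 0) then 1 else 0)"

text \<open>Z in C^{N x f} is given as a function nat => nat => complex, column index k < f;
  (Z Z^T)_{ij} = sum_k Z i k * Z j k (non-conjugated transpose).\<close>
definition has_complex_sign_factorization ::
  "nat \<Rightarrow> (nat \<Rightarrow> nat \<Rightarrow> real) \<Rightarrow> nat \<Rightarrow> bool" where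
  "has_complex_sign_factorization N A f \<longleftrightarrow>
     (\<exists>Z :: nat \<Rightarrow> nat \<Rightarrow> complex. \<forall>i<N. \<forall>j<N. i \<noteq> j \<longrightarrow>
        sgnpm (A i j) = sgnpm (Re (\<Sum>k<f. Z i k * Z j k)))"

definition complex_sign_rank :: "nat \<Rightarrow> (nat \<Rightarrow> nat \<Rightarrow> real) \<Rightarrow> nat" where
  "complex_sign_rank N A = (LEAST f. has_complex_sign_factorization N A f)"

end

theory Submission
  imports Defs
begin

definition zz :: "nat \<Rightarrow> complex" where
  "zz i = (if i = 0 then 1 else Complex 1 1)"

lemma zz_ok: "i \<noteq> j \<Longrightarrow> sgnpm (star_adj i j) = sgnpm (Re (zz i * zz j))"
  by (auto simp: zz_def star_adj_def sgnpm_def)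

lemma fact1: "has_complex_sign_factorization N star_adj 1"
  unfolding has_complex_sign_factorization_def
  by (rule exI[of _ "\<lambda>i k. zz i"]) (simp add: zz_ok)

lemma not0: "N \<ge> 2 \<Longrightarrow> \<not> has_complex_sign_factorization N star_adj 0"
  unfolding has_complex_sign_factorization_def
proof
  assume "N \<ge> 2" and h: "\<exists>Z :: nat \<Rightarrow> nat \<Rightarrow> complex. \<forall>i<N. \<forall>j<N. i \<noteq> j \<longrightarrow>
        sgnpm (star_adj i j) = sgnpm (Re (\<Sum>k<0. Z i k * Z j k))"
  then obtain Z :: "nat \<Rightarrow> nat \<Rightarrow> complex" where "\<forall>i<N. \<forall>j<N. i \<noteq> j \<longrightarrow>
        sgnpm (star_adj i j) = sgnpm (Re (\<Sum>k<0. Z i k * Z j k))" by blast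
  hence "sgnpm (star_adj 0 1) = sgnpm (Re (\<Sum>k<0. Z 0 k * Z 1 k))" using \<open>N \<ge> 2\<close> by auto
  thus False by (simp add: star_adj_def sgnpm_def)
qed

theorem theorem4:
  fixes N :: nat
  assumes "N \<ge> 1"
  shows "(\<exists>z :: nat \<Rightarrow> complex. \<forall>i<N. \<forall>j<N. i \<noteq> j \<longrightarrow>
            sgnpm (star_adj i j) = sgnpm (Re (z i * z j)))
         \<and> complex_sign_rank N star_adj \<le> 1
         \<and> (N \<ge> 2 \<longrightarrow> complex_sign_rank N star_adj = 1)"
proof (intro conjI impI)
  show "\<exists>z :: nat \<Rightarrow> complex. \<forall>i<N. \<forall>j<N. i \<noteq> j \<longrightarrow>
            sgnpm (star_adj i j) = sgnpm (Re (z i * z j))"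
    using zz_ok by blast
  show le: "complex_sign_rank N star_adj \<le> 1"
    unfolding complex_sign_rank_def by (rule Least_le) (rule fact1)
  assume "N \<ge> 2"
  hence "complex_sign_rank N star_adj \<noteq> 0"
    using not0 LeastI[of "has_complex_sign_factorization N star_adj", OF fact1] unfolding complex_sign_rank_def by metis
  with le show "complex_sign_rank N star_adj = 1" by simp
qed

end
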